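(* For integers $r,k\ge 0$ with $r\ne k$ and real $\alpha>\max\{k,r\}$, $$\sum_{n=1}^\infty\frac{H_{n+\alpha}}{(n+r)(n+k)}=\frac{k-\alpha}{k-r}\left\{\frac{H_{\alpha-k}^2+H_{\alpha-k}^{(2)}}{\alpha-k}-\sum_{j=1}^k\frac{H_{\alpha+j-k}}{j(\alpha+j-k)}\right\}+\frac{\alpha-r}{k-r}\left\{\frac{H_{\alpha-r}^2+H_{\alpha-r}^{(2)}}{\alpha-r}-\sum_{j=1}^r\frac{H_{\alpha+j-r}}{j(\alpha+j-r)}\right\}.$$
   Context: Shifted harmonic numbers: for a real $\alpha$ that is not a negative integer, $H_\alpha := \sum_{k=1}^\infty\left(\frac1k-\frac1{k+\alpha}\right)$ and, for integers $m\ge 2$, $H_\alpha^{(m)} := \sum_{k=1}^\infty\left(\frac1{k^m}-\frac1{(k+\alpha)^m}\right)=\zeta(m)-\zeta(m,\alpha+1)$, where $\zeta$ is the Riemann zeta function and $\zeta(s,\alpha+1)=\sum_{n=1}^\infty (n+\alpha)^{-s}$ is the Hurwitz zeta function. Powers such as $H_\alpha^2$ mean $(H_\alpha)^2$. Empty sums are $0$. *)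

theory Defs
  imports "HOL-Analysis.Analysis"
begin

definition shifted_harmonic :: "real \<Rightarrow> real" where
  "shifted_harmonic a = (\<Sum>k. 1 / real (Suc k) - 1 / (real (Suc k) + a))"

definition shifted_harmonic_ord :: "nat \<Rightarrow> real \<Rightarrow> real" where
  "shifted_harmonic_ord m a = (\<Sum>k. 1 / real (Suc k) ^ m - 1 / (real (Suc k) + a) ^ m)"

end

theory Submission
  imports Defs "HOL-Real_Asymp.Real_Asymp"
begin

lemma inv_sq_summable: "summable (\<lambda>k. 1 / real (Suc k) ^ 2)"
proof -
  have "summable (\<lambda>k. inverse (real (Suc k) ^ 2))"
    using inverse_power_summable[of 2, where 'a=real] by (subst summable_Suc_iff) simp
  thus ?thesis by (simp add: inverse_eq_divide)
qed

lemma sh_summable: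
  assumes "a \<ge> 0"
  shows "summable (\<lambda>k. 1 / real (Suc k) - 1 / (real (Suc k) + a))"
proof (rule summable_comparison_test'[where g="\<lambda>k. a * (1 / real (Suc k) ^ 2)"])
  show "summable (\<lambda>k. a * (1 / real (Suc k) ^ 2))" by (intro summable_mult inv_sq_summable)
  fix k :: nat
  have e: "1 / real (Suc k) - 1 / (real (Suc k) + a) = a / (real (Suc k) * (real (Suc k) + a))"
    using assms by (simp add: field_simps)
  have "a / (real (Suc k) * (real (Suc k) + a)) \<le> a / (real (Suc k) * real (Suc k))"
    using assms by (intro divide_left_mono mult_left_mono) auto
  moreover have "0 \<le> a / (real (Suc k) * (real (Suc k) + a))" using assms by simp
  ultimately show "norm (1 / real (Suc k) - 1 / (real (Suc k) + a)) \<le> a * (1 / real (Suc k) ^ 2)"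
    unfolding e real_norm_def using assms by (simp add: power2_eq_square abs_mult)
qed

lemma sh_nonneg: "a \<ge> 0 \<Longrightarrow> shifted_harmonic a \<ge> 0"
  unfolding shifted_harmonic_def
  by (intro suminf_nonneg sh_summable) (auto simp: field_simps)

lemma sh_zero: "shifted_harmonic 0 = 0"
  unfolding shifted_harmonic_def by simp

lemma sh_rec:
  assumes "a \<ge> 0"
  shows "shifted_harmonic (a + 1) = shifted_harmonic a + 1 / (a + 1)"
proof -
  have s1: "summable (\<lambda>k. 1 / real (Suc k) - 1 / (real (Suc k) + (a+1)))"
    using assms by (intro sh_summable) auto
  have s2: "summable (\<lambda>k. 1 / real (Suc k) - 1 / (real (Suc k) + a))"
    using assms by (intro sh_summable) auto
  define f where "f = (\<lambda>k::nat. 1 / (real (Suc k) + a))"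
  have "f \<longlonglongrightarrow> 0" unfolding f_def by real_asymp
  from telescope_sums'[OF this] have "(\<lambda>n. f n - f (Suc n)) sums (1 / (a + 1))"
    by (simp add: f_def add.commute)
  moreover have "(\<lambda>n. f n - f (Suc n)) = (\<lambda>k. (1 / real (Suc k) - 1 / (real (Suc k) + (a+1)))
      - (1 / real (Suc k) - 1 / (real (Suc k) + a)))"
    by (auto simp: f_def add_ac)
  ultimately have "(\<lambda>k. (1 / real (Suc k) - 1 / (real (Suc k) + (a+1)))
      - (1 / real (Suc k) - 1 / (real (Suc k) + a))) sums (1/(a+1))" by simp
  moreover have "(\<lambda>k. (1 / real (Suc k) - 1 / (real (Suc k) + (a+1)))
      - (1 / real (Suc k) - 1 / (real (Suc k) + a))) sums (shifted_harmonic (a+1) - shifted_harmonic a)"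
    unfolding shifted_harmonic_def by (intro sums_diff summable_sums s1 s2)
  ultimately show ?thesis using sums_unique2 by fastforce
qed

lemma sh2_summable:
  assumes "a \<ge> 0"
  shows "summable (\<lambda>k. 1 / (real (Suc k) + a) ^ 2)"
proof (rule summable_comparison_test'[OF inv_sq_summable])
  fix k :: nat
  show "norm (1 / (real (Suc k) + a) ^ 2) \<le> 1 / real (Suc k) ^ 2"
    using assms by (auto intro!: divide_left_mono power_mono mult_pos_pos)
qed

lemma sh2_rec:
  assumes "a \<ge> 0"
  shows "shifted_harmonic_ord 2 (a + 1) = shifted_harmonic_ord 2 a + 1 / (a + 1) ^ 2"
proof -
  have s0: "summable (\<lambda>k. 1 / real (Suc k) ^ 2)" by (rule inv_sq_summable)
  have s1: "summable (\<lambda>k. 1 / (real (Suc k) + (a+1)) ^ 2)"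
    using assms by (intro sh2_summable) auto
  have s2: "summable (\<lambda>k. 1 / (real (Suc k) + a) ^ 2)"
    using assms by (intro sh2_summable) auto
  define f where "f = (\<lambda>k::nat. 1 / (real (Suc k) + a) ^ 2)"
  have "f \<longlonglongrightarrow> 0" unfolding f_def by real_asymp
  from telescope_sums'[OF this] have "(\<lambda>n. f n - f (Suc n)) sums (1 / (a + 1) ^ 2)"
    by (simp add: f_def add.commute)
  moreover have "(\<lambda>n. f n - f (Suc n)) = (\<lambda>k. (1 / real (Suc k) ^ 2 - 1 / (real (Suc k) + (a+1)) ^ 2)
      - (1 / real (Suc k) ^ 2 - 1 / (real (Suc k) + a) ^ 2))"
    by (auto simp: f_def add_ac)
  ultimately have "(\<lambda>k. (1 / real (Suc k) ^ 2 - 1 / (real (Suc k) + (a+1)) ^ 2)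
      - (1 / real (Suc k) ^ 2 - 1 / (real (Suc k) + a) ^ 2)) sums (1/(a+1)^2)" by simp
  moreover have "(\<lambda>k. (1 / real (Suc k) ^ 2 - 1 / (real (Suc k) + (a+1)) ^ 2)
      - (1 / real (Suc k) ^ 2 - 1 / (real (Suc k) + a) ^ 2)) sums (shifted_harmonic_ord 2 (a+1) - shifted_harmonic_ord 2 a)"
    unfolding shifted_harmonic_ord_def by (intro sums_diff summable_sums s1 s2 s0 summable_diff)
  ultimately show ?thesis using sums_unique2 by fastforce
qed


abbreviation H where "H \<equiv> shifted_harmonic"

lemma sh_shift:
  assumes "a \<ge> 0"
  shows "H (real N + a) = H a + (\<Sum>i<N. 1 / (real (Suc i) + a))"
proof (induction N)
  case 0 then show ?case by simp
next
  case (Suc N)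
  have "H (real (Suc N) + a) = H ((real N + a) + 1)" by (simp add: add_ac)
  also have "\<dots> = H (real N + a) + 1 / (real N + a + 1)" using assms by (intro sh_rec) auto
  finally show ?case using Suc by (simp add: add_ac)
qed

lemma harm_bound: "harm N \<le> ln (real N + 1) + (1::real)"
proof (cases "N = 0")
  case True then show ?thesis by (simp add: harm_def)
next
  case False
  have "harm N - ln (real N) \<le> harm 1 - ln (real (1::nat)) "
    using euler_mascheroni_sequence_decreasing[of 1 N] False by simp
  moreover have "ln (real N) \<le> ln (real N + 1)" using False by simp
  ultimately show ?thesis by (simp add: harm_def)
qed

lemma tail0:
  assumes "a \<ge> 0" "c > 0"
  shows "(\<lambda>N. H (real N + a) / (real N + c)) \<longlonglongrightarrow> 0"
proof (rule tendsto_sandwich[of "\<lambda>_. 0" _ _ "\<lambda>N. (H a + ln (real N + 1) + 1) / (real N + c)"])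
  show "\<forall>\<^sub>F N in sequentially. 0 \<le> H (real N + a) / (real N + c)"
    using assms sh_nonneg[of "real _ + a"] by (auto intro!: divide_nonneg_pos)
  show "\<forall>\<^sub>F N in sequentially. H (real N + a) / (real N + c) \<le> (H a + ln (real N + 1) + 1) / (real N + c)"
  proof (intro always_eventually allI divide_right_mono)
    fix N :: nat
    have "(\<Sum>i<N. 1 / (real (Suc i) + a)) \<le> (\<Sum>i<N. inverse (real (Suc i)))"
      using assms by (intro sum_mono) (auto simp: inverse_eq_divide intro!: divide_left_mono)
    also have "\<dots> = harm N" by (simp add: harm_altdef)
    finally show "H (real N + a) \<le> H a + ln (real N + 1) + 1"
      using harm_bound[of N] sh_shift[OF assms(1), of N] by simp
  qed (use assms in auto)
  show "(\<lambda>N. (H a + ln (real N + 1) + 1) / (real N + c)) \<longlonglongrightarrow> 0"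
    using assms(2) by real_asymp
qed simp

lemma alg1:
  fixes n a m x S P :: real
  assumes "n + a + 1 > 0" "n + 1 + m > 0" "n + 1 + m + 1 > 0" "n + 1 + a > 0" "n + (m + 1) > 0"
  shows "P + S - x / (n + (m + 1)) + (x + 1 / (n + a + 1)) * (1 / (n + 1 + m) - 1 / (n + 1 + m + 1))
       = P + S + 1 / ((n + 1 + a) * (n + 1 + m)) - (x + 1 / (n + a + 1)) / (n + 1 + (m + 1))"
proof -
  have e1: "n + 1 + a = n + a + 1" "n + (m+1) = n + 1 + m" "n + 1 + (m + 1) = n + 1 + m + 1" by simp_all
  show ?thesis unfolding e1 using assms by (simp add: divide_simps) (simp add: algebra_simps)
qed

lemma alg2:
  fixes s a m :: real
  assumes "s > 0" "s + a > 0" "s + m > 0" "a \<noteq> m"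
  shows "((1 / s - 1 / (s + a)) - (1 / s - 1 / (s + m))) / (a - m) = 1 / ((s + a) * (s + m))"
proof -
  have "a - m \<noteq> 0" using assms by simp
  thus ?thesis using assms by (simp add: divide_simps) (simp add: algebra_simps)
qed

lemma D_sums:
  assumes "\<alpha> \<ge> 0" "\<alpha> \<noteq> real m"
  shows "(\<lambda>n. H (real (Suc n) + \<alpha>) * (1 / (real (Suc n) + real m) - 1 / (real (Suc n) + real m + 1)))
     sums (H \<alpha> / (real m + 1) + (H \<alpha> - H (real m)) / (\<alpha> - real m))"
proof -
  define t where "t = (\<lambda>n. H (real (Suc n) + \<alpha>) * (1 / (real (Suc n) + real m) - 1 / (real (Suc n) + real m + 1)))"
  define u where "u = (\<lambda>n. 1 / ((real (Suc n) + \<alpha>) * (real (Suc n) + real m)))"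
  have P: "(\<Sum>n<N. t n) = H \<alpha> / (real m + 1) + (\<Sum>n<N. u n) - H (real N + \<alpha>) / (real N + (real m + 1))" for N
  proof (induction N)
    case 0 then show ?case by simp
  next
    case (Suc N)
    have h: "H (real (Suc N) + \<alpha>) = H (real N + \<alpha>) + 1 / (real N + \<alpha> + 1)"
      using sh_rec[of "real N + \<alpha>"] assms by (simp add: add_ac)
    have p: "real N + \<alpha> + 1 > 0" "real (Suc N) + real m > 0" "real N + (real m + 1) > 0"
      "real (Suc N) + \<alpha> > 0" using assms by auto
    define x where "x = H (real N + \<alpha>)"
    define S where "S = (\<Sum>n<N. u n)"
    have p: "real N + \<alpha> + 1 > 0" "real N + 1 + real m > 0" "real N + 1 + real m + 1 > 0"
      "real N + 1 + \<alpha> > 0" using assms by auto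
    have "(\<Sum>n<Suc N. t n) = (\<Sum>n<N. t n) + t N" by simp
    also have "\<dots> = H \<alpha> / (real m + 1) + S - x / (real N + (real m + 1))
        + (x + 1 / (real N + \<alpha> + 1)) * (1 / (real N + 1 + real m) - 1 / (real N + 1 + real m + 1))"
      unfolding Suc.IH unfolding t_def h x_def S_def by (simp add: add_ac)
    also have "\<dots> = H \<alpha> / (real m + 1) + S + 1 / ((real N + 1 + \<alpha>) * (real N + 1 + real m))
        - (x + 1 / (real N + \<alpha> + 1)) / (real N + 1 + (real m + 1))"
      using p by (intro alg1) auto
    also have "\<dots> = H \<alpha> / (real m + 1) + (\<Sum>n<Suc N. u n) - H (real (Suc N) + \<alpha>) / (real (Suc N) + (real m + 1))"
      unfolding u_def h x_def S_def by (simp add: add_ac)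
    finally show ?case .
  qed
  have us: "u sums ((H \<alpha> - H (real m)) / (\<alpha> - real m))"
  proof -
    have "(\<lambda>k. ((1 / real (Suc k) - 1 / (real (Suc k) + \<alpha>)) - (1 / real (Suc k) - 1 / (real (Suc k) + real m))) / (\<alpha> - real m))
        sums ((H \<alpha> - H (real m)) / (\<alpha> - real m))"
      unfolding shifted_harmonic_def using assms
      by (intro sums_divide sums_diff summable_sums sh_summable) auto
    moreover have "(\<lambda>k. ((1 / real (Suc k) - 1 / (real (Suc k) + \<alpha>)) - (1 / real (Suc k) - 1 / (real (Suc k) + real m))) / (\<alpha> - real m)) = u"
    proof
      fix k
      have "real (Suc k) + \<alpha> > 0" "real (Suc k) + real m > 0" "\<alpha> - real m \<noteq> 0" using assms by auto
      thus "((1 / real (Suc k) - 1 / (real (Suc k) + \<alpha>)) - (1 / real (Suc k) - 1 / (real (Suc k) + real m))) / (\<alpha> - real m) = u k"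
        unfolding u_def using assms by (intro alg2) auto
    qed
    ultimately show ?thesis by simp
  qed
  have "(\<lambda>N. H \<alpha> / (real m + 1) + (\<Sum>n<N. u n) - H (real N + \<alpha>) / (real N + (real m + 1)))
      \<longlonglongrightarrow> H \<alpha> / (real m + 1) + (H \<alpha> - H (real m)) / (\<alpha> - real m) - 0"
    using us assms unfolding sums_def by (intro tendsto_intros tail0) auto
  thus ?thesis unfolding sums_def t_def[symmetric] P by simp
qed


lemma alg3:
  fixes b m y h :: real
  assumes "b > 0" "m \<ge> 0"
  shows "y / (m + 1) + (y - h) / b - b * ((y + 1 / (b + m + 1)) / ((m + 1) * (b + m + 1)))
     + (b - 1) * ((y + 1 / (b + m + 1)) / ((m + 2) * (b + m + 1)))
     = (y + 1 / (b + m + 1)) / (m + 2) + ((y + 1 / (b + m + 1)) - (h + 1 / (m + 1))) / b"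
proof -
  have "b + m + 1 > 0" "m + 1 > 0" "m + 2 > 0" using assms by auto
  thus ?thesis using assms by (simp add: divide_simps) (simp add: algebra_simps)
qed

lemma L:
  assumes "b \<ge> 1"
  shows "2 * H b / b - b * (\<Sum>j=1..m. H (b + real j) / (real j * (b + real j)))
     + (b - 1) * (\<Sum>j=1..Suc m. H (b - 1 + real j) / (real j * (b - 1 + real j)))
     = H (b + real m) / (real m + 1) + (H (b + real m) - H (real m)) / b"
proof (induction m)
  case 0
  have "b > 0" using assms by simp
  then show ?case by (simp add: sh_zero) (simp add: field_simps)
next
  case (Suc m)
  define A where "A = (\<Sum>j=1..m. H (b + real j) / (real j * (b + real j)))"
  define B where "B = (\<Sum>j=1..Suc m. H (b - 1 + real j) / (real j * (b - 1 + real j)))"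
  define y where "y = H (b + real m)"
  define h where "h = H (real m)"
  have hy: "H (b + real (Suc m)) = y + 1 / (b + real m + 1)"
    using sh_rec[of "b + real m"] assms unfolding y_def by (simp add: add_ac)
  have hh: "H (real (Suc m)) = h + 1 / (real m + 1)"
    using sh_rec[of "real m"] unfolding h_def by (simp add: add_ac)
  have s1: "(\<Sum>j=1..Suc m. H (b + real j) / (real j * (b + real j)))
      = A + (y + 1 / (b + real m + 1)) / ((real m + 1) * (b + real m + 1))"
    unfolding A_def sum.cl_ivl_Suc[of _ 1 m] hy by (simp add: add_ac)
  have e2: "b - 1 + real (Suc (Suc m)) = b + real (Suc m)" by simp
  have s2: "(\<Sum>j=1..Suc (Suc m). H (b - 1 + real j) / (real j * (b - 1 + real j)))
      = B + (y + 1 / (b + real m + 1)) / ((real m + 2) * (b + real m + 1))"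
    unfolding B_def sum.cl_ivl_Suc[of _ 1 "Suc m"] e2 hy by (simp add: add_ac)
  have IH: "2 * H b / b - b * A + (b - 1) * B = y / (real m + 1) + (y - h) / b"
    using Suc.IH unfolding A_def B_def y_def h_def .
  have "2 * H b / b - b * (\<Sum>j=1..Suc m. H (b + real j) / (real j * (b + real j)))
     + (b - 1) * (\<Sum>j=1..Suc (Suc m). H (b - 1 + real j) / (real j * (b - 1 + real j)))
     = (2 * H b / b - b * A + (b - 1) * B) - b * ((y + 1 / (b + real m + 1)) / ((real m + 1) * (b + real m + 1)))
     + (b - 1) * ((y + 1 / (b + real m + 1)) / ((real m + 2) * (b + real m + 1)))"
    unfolding s1 s2 by (simp add: algebra_simps)
  also have "\<dots> = (y + 1 / (b + real m + 1)) / (real m + 2) + ((y + 1 / (b + real m + 1)) - (h + 1 / (real m + 1))) / b"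
    unfolding IH using assms by (intro alg3) auto
  also have "\<dots> = H (b + real (Suc m)) / (real (Suc m) + 1) + (H (b + real (Suc m)) - H (real (Suc m))) / b"
    unfolding hy hh by (simp add: add_ac)
  finally show ?case .
qed


definition G :: "real \<Rightarrow> nat \<Rightarrow> real" where
  "G \<alpha> m = H (\<alpha> - real m) ^ 2 + shifted_harmonic_ord 2 (\<alpha> - real m)
     - (\<alpha> - real m) * (\<Sum>j=1..m. H (\<alpha> + real j - real m) / (real j * (\<alpha> + real j - real m)))"

lemma Gdiff:
  assumes "\<alpha> \<ge> real m + 1"
  shows "G \<alpha> m - G \<alpha> (Suc m) = H \<alpha> / (real m + 1) + (H \<alpha> - H (real m)) / (\<alpha> - real m)"
proof -
  define b where "b = \<alpha> - real m"
  have b1: "b \<ge> 1" using assms by (simp add: b_def)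
  have eb: "\<alpha> - real (Suc m) = b - 1" by (simp add: b_def)
  define p where "p = H (b - 1)"
  define q where "q = shifted_harmonic_ord 2 (b - 1)"
  have hp: "H b = p + 1 / b" using sh_rec[of "b - 1"] b1 unfolding p_def by simp
  have hq: "shifted_harmonic_ord 2 b = q + 1 / b ^ 2" using sh2_rec[of "b - 1"] b1 unfolding q_def by simp
  have sA: "(\<Sum>j=1..m. H (\<alpha> + real j - real m) / (real j * (\<alpha> + real j - real m)))
      = (\<Sum>j=1..m. H (b + real j) / (real j * (b + real j)))"
    by (intro sum.cong) (auto simp: b_def algebra_simps)
  have sB: "(\<Sum>j=1..Suc m. H (\<alpha> + real j - real (Suc m)) / (real j * (\<alpha> + real j - real (Suc m))))
      = (\<Sum>j=1..Suc m. H (b - 1 + real j) / (real j * (b - 1 + real j)))"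
    by (intro sum.cong) (auto simp: b_def algebra_simps)
  have "G \<alpha> m - G \<alpha> (Suc m) = (H b ^ 2 + shifted_harmonic_ord 2 b - b * (\<Sum>j=1..m. H (b + real j) / (real j * (b + real j))))
     - (p ^ 2 + q - (b - 1) * (\<Sum>j=1..Suc m. H (b - 1 + real j) / (real j * (b - 1 + real j))))"
    unfolding G_def sA sB eb by (simp add: b_def p_def q_def)
  also have "\<dots> = 2 * H b / b - b * (\<Sum>j=1..m. H (b + real j) / (real j * (b + real j)))
     + (b - 1) * (\<Sum>j=1..Suc m. H (b - 1 + real j) / (real j * (b - 1 + real j)))"
    unfolding hp hq using b1 by (simp add: field_simps power2_eq_square)
  also have "\<dots> = H (b + real m) / (real m + 1) + (H (b + real m) - H (real m)) / b"
    by (rule L[OF b1])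
  finally show ?thesis by (simp add: b_def)
qed


lemma W:
  assumes "r \<le> k" "\<alpha> \<ge> real k"
  shows "(\<lambda>n. H (real (Suc n) + \<alpha>) * (1 / (real (Suc n) + real r) - 1 / (real (Suc n) + real k)))
     sums (G \<alpha> r - G \<alpha> k)"
  using assms
proof (induction k)
  case 0 then show ?case by simp
next
  case (Suc k)
  show ?case
  proof (cases "r = Suc k")
    case True then show ?thesis by simp
  next
    case False
    with Suc.prems have rk: "r \<le> k" "\<alpha> \<ge> real k + 1" by auto
    have i: "(\<lambda>n. H (real (Suc n) + \<alpha>) * (1 / (real (Suc n) + real r) - 1 / (real (Suc n) + real k)))
     sums (G \<alpha> r - G \<alpha> k)" using Suc.IH rk by auto
    have d: "(\<lambda>n. H (real (Suc n) + \<alpha>) * (1 / (real (Suc n) + real k) - 1 / (real (Suc n) + real k + 1)))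
     sums (G \<alpha> k - G \<alpha> (Suc k))"
      using D_sums[of \<alpha> k] Gdiff[of k \<alpha>] rk by auto
    from sums_add[OF i d] show ?thesis
      by (simp add: algebra_simps)
  qed
qed

lemma alg4:
  fixes a k r Qk Sk Qr Sr :: real
  assumes "a \<noteq> k" "a \<noteq> r" "k \<noteq> r"
  shows "((Qr - (a - r) * Sr) - (Qk - (a - k) * Sk)) / (k - r)
     = (k - a) / (k - r) * (Qk / (a - k) - Sk) + (a - r) / (k - r) * (Qr / (a - r) - Sr)"
proof -
  have "a - k \<noteq> 0" "a - r \<noteq> 0" "k - r \<noteq> 0" using assms by auto
  thus ?thesis by (simp add: divide_simps) (simp add: algebra_simps)
qed

lemma alg5:
  fixes s r k X :: real
  assumes "s > 0" "r \<ge> 0" "k \<ge> 0" "k \<noteq> r"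
  shows "X / ((s + r) * (s + k)) = X * (1 / (s + r) - 1 / (s + k)) / (k - r)"
proof -
  have "s + r > 0" "s + k > 0" "k - r \<noteq> 0" using assms by auto
  thus ?thesis by (simp add: divide_simps)
qed

theorem theorem2p2:
  fixes r k :: nat and \<alpha> :: real
  assumes "r \<noteq> k" and "\<alpha> > real (max k r)"
  shows "(\<lambda>n. shifted_harmonic (real (Suc n) + \<alpha>) /
              ((real (Suc n) + real r) * (real (Suc n) + real k)))
         sums
         ((real k - \<alpha>) / (real k - real r) *
            ((shifted_harmonic (\<alpha> - real k) ^ 2 + shifted_harmonic_ord 2 (\<alpha> - real k)) / (\<alpha> - real k)
             - (\<Sum>j=1..k. shifted_harmonic (\<alpha> + real j - real k) / (real j * (\<alpha> + real j - real k))))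
          + (\<alpha> - real r) / (real k - real r) *
            ((shifted_harmonic (\<alpha> - real r) ^ 2 + shifted_harmonic_ord 2 (\<alpha> - real r)) / (\<alpha> - real r)
             - (\<Sum>j=1..r. shifted_harmonic (\<alpha> + real j - real r) / (real j * (\<alpha> + real j - real r)))))"
proof -
  have ak: "\<alpha> > real k" and ar: "\<alpha> > real r" using assms(2) by auto
  have W': "(\<lambda>n. H (real (Suc n) + \<alpha>) * (1 / (real (Suc n) + real r) - 1 / (real (Suc n) + real k)))
     sums (G \<alpha> r - G \<alpha> k)"
  proof (cases "r \<le> k")
    case True then show ?thesis using W[of r k \<alpha>] ak by auto
  next
    case False
    then have "k \<le> r" by simp
    from sums_minus[OF W[OF this, of \<alpha>]] ar show ?thesis by (simp add: algebra_simps)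
  qed
  have kr: "real k \<noteq> real r" using assms(1) by simp
  from sums_divide[OF W', of "real k - real r"]
  have S: "(\<lambda>n. shifted_harmonic (real (Suc n) + \<alpha>) /
              ((real (Suc n) + real r) * (real (Suc n) + real k))) sums ((G \<alpha> r - G \<alpha> k) / (real k - real r))"
    using alg5[of "real (Suc n)" "real r" "real k" for n] kr
    by (simp del: of_nat_Suc)
  have "(G \<alpha> r - G \<alpha> k) / (real k - real r) = ((real k - \<alpha>) / (real k - real r) *
            ((shifted_harmonic (\<alpha> - real k) ^ 2 + shifted_harmonic_ord 2 (\<alpha> - real k)) / (\<alpha> - real k)
             - (\<Sum>j=1..k. shifted_harmonic (\<alpha> + real j - real k) / (real j * (\<alpha> + real j - real k))))
          + (\<alpha> - real r) / (real k - real r) *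
            ((shifted_harmonic (\<alpha> - real r) ^ 2 + shifted_harmonic_ord 2 (\<alpha> - real r)) / (\<alpha> - real r)
             - (\<Sum>j=1..r. shifted_harmonic (\<alpha> + real j - real r) / (real j * (\<alpha> + real j - real r)))))"
    unfolding G_def using ak ar kr by (intro alg4) auto
  with S show ?thesis by simp
qed

end
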